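(* Let $k\ge 3$ be odd and let $G$ be a $k$-uniform hyperpath of length $r\ge 3$, with Laplacian tensor $\mathcal L$. Then $\lambda(\mathcal L)=2$.
   Context: A $k$-uniform hyperpath of length $d$ has vertex set $\{i_{1,1},\ldots,i_{1,k}\}\cup\{i_{j,s}: 2\le j\le d,\ 2\le s\le k\}$ (all distinct) and edges $\{i_{1,1},\ldots,i_{1,k}\}$ and $\{i_{j-1,k},i_{j,2},\ldots,i_{j,k}\}$ for $2\le j\le d$. For a $k$-uniform hypergraph $G=(V,E)$ with $V=[n]$ and $d_i$ the number of edges containing $i$, the Laplacian tensor $\mathcal L=\mathcal D-\mathcal A$ ($\mathcal D$ diagonal with entries $d_i$, $\mathcal A$ with entries $\frac1{(k-1)!}$ at index tuples forming an edge and $0$ otherwise) satisfies $(\mathcal L\mathbf x^{k-1})_i=d_ix_i^{k-1}-\sum_{e\in E,\,i\in e}\prod_{s\in e\setminus\{i\}}x_s$. A real $\lambda$ is an H-eigenvalue of $\mathcal L$ if some nonzero $\mathbf x\in\mathbb R^n$ satisfies $(\mathcal L\mathbf x^{k-1})_i=\lambda x_i^{k-1}$ for all $i$; $\lambda(\mathcal L)$ is the largest H-eigenvalue. *)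

theory Defs
  imports "HOL-Analysis.Analysis"
begin

text \<open>A k-uniform hypergraph is given by a finite vertex set V and a set E of edges
(subsets of V of cardinality k).  The vertex names are arbitrary (any labelling by [n]
gives the same spectrum).\<close>

definition degree :: "'a set set \<Rightarrow> 'a \<Rightarrow> nat" where
  "degree E i = card {e \<in> E. i \<in> e}"

definition laplacian_apply :: "'a set set \<Rightarrow> nat \<Rightarrow> ('a \<Rightarrow> real) \<Rightarrow> 'a \<Rightarrow> real" where
  "laplacian_apply E k x i =
     real (degree E i) * x i ^ (k - 1) - (\<Sum>e\<in>{e \<in> E. i \<in> e}. \<Prod>s\<in>e - {i}. x s)"

definition is_H_eigenvalue :: "'a set \<Rightarrow> 'a set set \<Rightarrow> nat \<Rightarrow> real \<Rightarrow> bool" where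
  "is_H_eigenvalue V E k lam \<longleftrightarrow>
     (\<exists>x :: 'a \<Rightarrow> real. (\<exists>i\<in>V. x i \<noteq> 0) \<and>
        (\<forall>i\<in>V. laplacian_apply E k x i = lam * x i ^ (k - 1)))"

definition largest_H_eigenvalue :: "'a set \<Rightarrow> 'a set set \<Rightarrow> nat \<Rightarrow> real" where
  "largest_H_eigenvalue V E k = (GREATEST lam. is_H_eigenvalue V E k lam)"

text \<open>k-uniform hyperpath of length d: vertices i(j,s), with i(1,s) for 1<=s<=k and
i(j,s) for 2<=j<=d, 2<=s<=k all distinct; we set i(j,1) = i(j-1,k) for j>=2, so that
the edges are exactly {i(j,1),...,i(j,k)} for 1<=j<=d.\<close>
definition hyperpath_index_set :: "nat \<Rightarrow> nat \<Rightarrow> (nat \<times> nat) set" where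
  "hyperpath_index_set k d =
     {(1, s) | s. 1 \<le> s \<and> s \<le> k} \<union> {(j, s) | j s. 2 \<le> j \<and> j \<le> d \<and> 2 \<le> s \<and> s \<le> k}"

definition is_hyperpath :: "nat \<Rightarrow> nat \<Rightarrow> 'a set \<Rightarrow> 'a set set \<Rightarrow> bool" where
  "is_hyperpath k d V E \<longleftrightarrow>
     (\<exists>f :: nat \<Rightarrow> nat \<Rightarrow> 'a.
        inj_on (\<lambda>(j, s). f j s) (hyperpath_index_set k d) \<and>
        (\<forall>j. 2 \<le> j \<and> j \<le> d \<longrightarrow> f j 1 = f (j - 1) k) \<and>
        V = (\<lambda>(j, s). f j s) ` hyperpath_index_set k d \<and>
        E = {f j ` {1..k} | j. 1 \<le> j \<and> j \<le> d})"

end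

theory Submission
  imports Defs
begin


lemma odd_pow_inj: "odd (k::nat) \<Longrightarrow> (x::real)^k = y^k \<Longrightarrow> x = y"
  by (metis odd_real_root_power_cancel)

lemma sgn_odd_pow: "odd (k::nat) \<Longrightarrow> sgn (y::real) * y^k = \<bar>y\<bar>^k"
proof -
  assume "odd k"
  then obtain m where m: "k = Suc (2*m)" using oddE by (metis Suc_eq_plus1)
  have "y^k = y * (y^2)^m" unfolding m by (simp add: power_mult)
  moreover have "\<bar>y\<bar>^k = \<bar>y\<bar> * (y^2)^m" unfolding m by (simp add: power_mult)
  moreover have "sgn y * y = \<bar>y\<bar>" by (simp add: sgn_real_def)
  ultimately show ?thesis by (metis mult.assoc)
qed

lemma dec_chain:
  fixes D :: "nat \<Rightarrow> real"
  assumes "\<And>j. 2 \<le> j \<Longrightarrow> j \<le> m \<Longrightarrow> D j \<le> D (j-1)"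
  shows "1 \<le> i \<Longrightarrow> i \<le> n \<Longrightarrow> n \<le> m \<Longrightarrow> D n \<le> D i"
proof (induction n)
  case 0 then show ?case by simp
next
  case (Suc n)
  show ?case
  proof (cases "i = Suc n")
    case True then show ?thesis by simp
  next
    case False
    then have "i \<le> n" using Suc by simp
    then have "D n \<le> D i" using Suc by simp
    moreover have "D (Suc n) \<le> D n" using assms[of "Suc n"] Suc \<open>i \<le> n\<close> by simp
    ultimately show ?thesis by simp
  qed
qed

lemma core:
  fixes X :: "nat \<Rightarrow> nat \<Rightarrow> real" and P :: "nat \<Rightarrow> real" and lam :: real
  assumes k3: "k \<ge> 3" and kodd: "odd k" and r2: "r \<ge> 2" and lam: "lam > 2"
  and P: "\<And>j. 1\<le>j \<Longrightarrow> j\<le>r \<Longrightarrow> P j = (\<Prod>s\<in>{1..k}. X j s)"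
  and glue: "\<And>j. 2\<le>j \<Longrightarrow> j\<le>r \<Longrightarrow> X j 1 = X (j-1) k"
  and priv: "\<And>j s. 1\<le>j \<Longrightarrow> j\<le>r \<Longrightarrow> 2\<le>s \<Longrightarrow> s\<le>k-1 \<Longrightarrow> (1-lam) * X j s ^ k = P j"
  and priv1: "(1-lam) * X 1 1 ^ k = P 1"
  and privr: "(1-lam) * X r k ^ k = P r"
  and junc: "\<And>j. 1\<le>j \<Longrightarrow> j\<le>r-1 \<Longrightarrow> (2-lam) * X j k ^ k = P j + P (j+1)"
  shows "\<And>j s. 1\<le>j \<Longrightarrow> j\<le>r \<Longrightarrow> 1\<le>s \<Longrightarrow> s\<le>k \<Longrightarrow> X j s = 0"
proof -
  have l1: "1 - lam \<noteq> 0" using lam by simp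
  have eqp: "X j s = X j 2" if "1\<le>j" "j\<le>r" "2\<le>s" "s\<le>k-1" for j s
  proof -
    have "(1-lam) * X j s ^ k = (1-lam) * X j 2 ^ k"
      using priv[OF that] priv[of j 2] that k3 by simp
    then show ?thesis using l1 odd_pow_inj[OF kodd] by simp
  qed
  have e11: "X 1 1 = X 1 2"
  proof -
    have "(1-lam) * X 1 1 ^ k = (1-lam) * X 1 2 ^ k"
      using priv1 priv[of 1 2] r2 k3 by simp
    then show ?thesis using l1 odd_pow_inj[OF kodd] by simp
  qed
  have erk: "X r k = X r 2"
  proof -
    have "(1-lam) * X r k ^ k = (1-lam) * X r 2 ^ k"
      using privr priv[of r 2] r2 k3 by simp
    then show ?thesis using l1 odd_pow_inj[OF kodd] by simp
  qed
  have Pf: "P j = X j 1 * X j k * X j 2 ^ (k-2)" if "1\<le>j" "j\<le>r" for j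
  proof -
    have set: "{1..k} = insert 1 (insert k {2..k-1})" using k3 by auto
    have n1: "1 \<notin> insert k {2..k-1}" using k3 by auto
    have n2: "k \<notin> {2..k-1}" using k3 by auto
    have "(\<Prod>s\<in>{1..k}. X j s) = (\<Prod>s\<in>insert 1 (insert k {2..k-1}). X j s)" using set by simp
    also have "\<dots> = X j 1 * (\<Prod>s\<in>insert k {2..k-1}. X j s)" using n1 by (simp add: prod.insert del: insert_iff)
    also have "(\<Prod>s\<in>insert k {2..k-1}. X j s) = X j k * (\<Prod>s\<in>{2..k-1}. X j s)" using n2 by (simp add: prod.insert del: atLeastAtMost_iff)
    also have "(\<Prod>s\<in>{2..k-1}. X j s) = (\<Prod>s\<in>{2..k-1}. X j 2)"
      by (rule prod.cong[OF refl], rule eqp[OF that]) auto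
    also have "\<dots> = X j 2 ^ (k-2)" using k3 by simp
    finally show ?thesis using P[OF that] by simp
  qed
  define y where "y j = X j k" for j
  define D where "D j = sgn (y j) * P (j+1)" for j
  have mid: "sgn (y (j-1)) * P j = - (sgn (y j) * P j)" if "2\<le>j" "j\<le>r-1" for j
  proof (cases "P j = 0")
    case True then show ?thesis by simp
  next
    case False
    define a where "a = X j 2"
    have Pj: "P j = y (j-1) * y j * a^(k-2)" using Pf[of j] glue[of j] that unfolding y_def a_def by simp
    have a0: "a \<noteq> 0" using False Pj k3 by auto
    have "(1-lam) * a^k = P j" using priv[of j 2] that k3 unfolding a_def by simp
    moreover have "a^k = a^(k-2) * a^2"
    proof -
      have "k-2+2 = k" using k3 by simp
      then show ?thesis using power_add[of a "k-2" 2] by simp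
    qed
    ultimately have "a^(k-2) * ((1-lam)*a^2 - y (j-1) * y j) = 0" using Pj by (simp add: algebra_simps)
    then have "y (j-1) * y j = (1-lam)*a^2" using a0 by simp
    moreover have "(1-lam)*a^2 < 0" using a0 lam by (simp add: mult_neg_pos)
    ultimately have "y (j-1) * y j < 0" by simp
    then have "sgn (y (j-1)) = - sgn (y j)"
      by (auto simp: mult_less_0_iff sgn_real_def)
    then show ?thesis by simp
  qed
  have kk: "k-1 = Suc (k-2)" using k3 by simp
  have ev: "even (k-1)" using kodd k3 by simp
  have end1: "sgn (y 1) * P 1 \<ge> 0"
  proof -
    have "P 1 = X 1 2 ^ (k-1) * y 1" using Pf[of 1] e11 r2 unfolding y_def kk by (simp add: algebra_simps)
    then have "sgn (y 1) * P 1 = X 1 2 ^ (k-1) * (sgn (y 1) * y 1)" by (simp add: algebra_simps)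
    also have "sgn (y 1) * y 1 = \<bar>y 1\<bar>" by (simp add: sgn_real_def)
    finally show ?thesis using ev by (simp add: zero_le_even_power)
  qed
  have endr: "sgn (y (r-1)) * P r \<ge> 0"
  proof -
    have "P r = X r 2 ^ (k-1) * y (r-1)" using Pf[of r] erk r2 glue[of r] unfolding y_def kk by (simp add: algebra_simps)
    then have "sgn (y (r-1)) * P r = X r 2 ^ (k-1) * (sgn (y (r-1)) * y (r-1))" by (simp add: algebra_simps)
    also have "sgn (y (r-1)) * y (r-1) = \<bar>y (r-1)\<bar>" by (simp add: sgn_real_def)
    finally show ?thesis using ev by (simp add: zero_le_even_power)
  qed
  have js: "sgn (y j) * P j + D j = (2-lam) * \<bar>y j\<bar>^k" if "1\<le>j" "j\<le>r-1" for j
  proof -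
    have e: "sgn (y j) * y j ^ k = \<bar>y j\<bar>^k" by (rule sgn_odd_pow[OF kodd])
    have "P j + P (j+1) = (2-lam) * y j ^ k" using junc[OF that] unfolding y_def by simp
    then have "sgn (y j) * (P j + P (j+1)) = (2-lam) * (sgn (y j) * y j ^ k)" by simp
    then show ?thesis unfolding e D_def by (simp add: algebra_simps)
  qed
  have Deq: "D j = D (j-1) + (2-lam) * \<bar>y j\<bar>^k" if "2\<le>j" "j\<le>r-1" for j
  proof -
    have "D (j-1) = sgn (y (j-1)) * P j" unfolding D_def using that by simp
    then show ?thesis using js[of j] mid[OF that] that by simp
  qed
  have ab: "\<bar>y j\<bar>^k \<ge> 0" for j by simp
  have r1: "1 \<le> r - 1" using r2 by simp
  have D1: "D 1 \<le> (2-lam) * \<bar>y 1\<bar>^k" using js[OF order_refl r1] end1 by simp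
  have Dl: "D (r-1) \<ge> 0" using endr r2 unfolding D_def by simp
  have step: "D j \<le> D (j-1)" if "2\<le>j" "j\<le>r-1" for j
    using Deq[OF that] lam ab[of j] by (simp add: mult_nonpos_nonneg)
  have ch1: "D j \<le> D 1" if "1\<le>j" "j\<le>r-1" for j
    using dec_chain[of "r-1" D 1 j, OF step] that by simp
  have ch2: "D (r-1) \<le> D j" if "1\<le>j" "j\<le>r-1" for j
    using dec_chain[of "r-1" D j "r-1", OF step] that by simp
  have "(2-lam) * \<bar>y 1\<bar>^k \<le> 0" using lam ab[of 1] by (simp add: mult_nonpos_nonneg)
  then have D10: "D 1 \<le> 0" using D1 by simp
  have Dz: "D j = 0" if "1\<le>j" "j\<le>r-1" for j
    using ch1[OF that] ch2[OF that] D10 Dl by simp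
  have y1: "(2-lam) * \<bar>y 1\<bar>^k \<ge> 0" using D1 Dz[OF order_refl r1] by simp
  then have "\<bar>y 1\<bar>^k = 0" using lam ab[of 1] unfolding zero_le_mult_iff by linarith
  then have y10: "y 1 = 0" by simp
  have yz: "y j = 0" if "1\<le>j" "j\<le>r-1" for j
  proof (cases "j = 1")
    case True then show ?thesis using y10 by simp
  next
    case False
    then have "(2-lam) * \<bar>y j\<bar>^k = 0" using Deq[of j] Dz[of j] Dz[of "j-1"] that by simp
    then show ?thesis using lam by simp
  qed
  have Pz: "P j = 0" if "1\<le>j" "j\<le>r" for j
  proof (cases "j \<le> r-1")
    case True then show ?thesis using Pf[OF that] yz[of j] that unfolding y_def by simp
  next
    case False
    then have "j = r" using that by simp
    then show ?thesis using Pf[OF that] glue[of r] yz[of "r-1"] r2 unfolding y_def by simp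
  qed
  have pz: "X j s = 0" if "(1-lam) * X j s ^ k = 0" for j s
    using that l1 by simp
  show "X j s = 0" if "1\<le>j" "j\<le>r" "1\<le>s" "s\<le>k" for j s
  proof -
    have c1: "j = 1 \<or> j \<ge> 2" "s = 1 \<or> (2\<le>s \<and> s\<le>k-1) \<or> s = k" "j \<le> r-1 \<or> j = r" using that by arith+
    consider "s = 1" "j = 1" | "s = 1" "j \<ge> 2" | "2 \<le> s" "s \<le> k-1" | "s = k" "j \<le> r-1" | "s = k" "j = r"
      using c1 by blast
    then show ?thesis
    proof cases
      case 1 then show ?thesis using priv1 Pz[of 1] r2 pz by simp
    next
      case 2 then show ?thesis using glue[of j] yz[of "j-1"] that unfolding y_def by simp
    next
      case 3 then show ?thesis using priv[of j s] Pz[of j] pz that by simp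
    next
      case 4 then show ?thesis using yz[of j] that unfolding y_def by simp
    next
      case 5 then show ?thesis using privr Pz[of r] pz r2 by simp
    qed
  qed
qed



locale hp =
  fixes f :: "nat \<Rightarrow> nat \<Rightarrow> 'a" and k r :: nat
  assumes k3: "3 \<le> k" and r2: "2 \<le> r"
  and inj: "inj_on (\<lambda>(j, s). f j s) (hyperpath_index_set k r)"
  and glue: "\<And>j. 2 \<le> j \<Longrightarrow> j \<le> r \<Longrightarrow> f j 1 = f (j-1) k"
begin

lemma I_iff: "(a,b) \<in> hyperpath_index_set k r \<longleftrightarrow> (a = 1 \<and> 1 \<le> b \<and> b \<le> k) \<or> (2 \<le> a \<and> a \<le> r \<and> 2 \<le> b \<and> b \<le> k)"
  by (auto simp: hyperpath_index_set_def)

lemma finj: "(a,b) \<in> hyperpath_index_set k r \<Longrightarrow> (c,d) \<in> hyperpath_index_set k r \<Longrightarrow> f a b = f c d \<Longrightarrow> a = c \<and> b = d"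
  using inj unfolding inj_on_def by fastforce

definition Ej where "Ej j = f j ` {1..k}"
definition EE where "EE = {Ej j | j. 1 \<le> j \<and> j \<le> r}"
definition J where "J v = {j. 1 \<le> j \<and> j \<le> r \<and> v \<in> Ej j}"
definition PP where "PP x j = (\<Prod>s\<in>{1..k}. x (f j s))"

lemma mem:
  assumes ab: "(a,b) \<in> hyperpath_index_set k r" and j: "1 \<le> j" "j \<le> r"
  shows "f a b \<in> Ej j \<longleftrightarrow> ((a = j \<and> 2 \<le> b \<and> b \<le> k) \<or> (j = 1 \<and> a = 1 \<and> b = 1) \<or> (2 \<le> j \<and> a = j-1 \<and> b = k))"
proof
  assume "f a b \<in> Ej j"
  then obtain s where s: "1 \<le> s" "s \<le> k" "f a b = f j s" unfolding Ej_def by auto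
  show "(a = j \<and> 2 \<le> b \<and> b \<le> k) \<or> (j = 1 \<and> a = 1 \<and> b = 1) \<or> (2 \<le> j \<and> a = j-1 \<and> b = k)"
  proof (cases "s = 1 \<and> 2 \<le> j")
    case True
    then have "f a b = f (j-1) k" using s glue[of j] j by simp
    moreover have "(j-1, k) \<in> hyperpath_index_set k r" using True j k3 unfolding I_iff by auto
    ultimately have "a = j-1 \<and> b = k" using finj ab by blast
    then show ?thesis using True by simp
  next
    case False
    have "(j, s) \<in> hyperpath_index_set k r" using False j s unfolding I_iff by auto
    then have "a = j \<and> b = s" using finj ab s by blast
    then show ?thesis using False s j by auto
  qed
next
  assume h: "(a = j \<and> 2 \<le> b \<and> b \<le> k) \<or> (j = 1 \<and> a = 1 \<and> b = 1) \<or> (2 \<le> j \<and> a = j-1 \<and> b = k)"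
  show "f a b \<in> Ej j"
  proof -
    consider "a = j" "2 \<le> b" "b \<le> k" | "j = 1" "a = 1" "b = 1" | "2 \<le> j" "a = j-1" "b = k" using h by blast
    then show ?thesis
    proof cases
      case 1 then show ?thesis unfolding Ej_def by auto
    next
      case 2 then show ?thesis unfolding Ej_def using k3 by auto
    next
      case 3
      then have "f a b = f j 1" using glue[of j] j by simp
      then show ?thesis unfolding Ej_def using k3 by auto
    qed
  qed
qed

lemma Ij2: "1 \<le> j \<Longrightarrow> j \<le> r \<Longrightarrow> (j, 2) \<in> hyperpath_index_set k r"
  using k3 unfolding I_iff by auto

lemma Ej_inj: "1 \<le> j \<Longrightarrow> j \<le> r \<Longrightarrow> 1 \<le> j' \<Longrightarrow> j' \<le> r \<Longrightarrow> Ej j = Ej j' \<Longrightarrow> j = j'"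
proof -
  assume a: "1 \<le> j" "j \<le> r" "1 \<le> j'" "j' \<le> r" "Ej j = Ej j'"
  have "f j 2 \<in> Ej j" using mem[OF Ij2[OF a(1,2)] a(1,2)] k3 by simp
  then have "f j 2 \<in> Ej j'" using a by simp
  then show "j = j'" using mem[OF Ij2[OF a(1,2)] a(3,4)] k3 by auto
qed

lemma Ej_inj_on: "inj_on Ej {j. 1 \<le> j \<and> j \<le> r \<and> P j}"
  by (rule inj_onI) (use Ej_inj in auto)

lemma fj_inj: assumes "1 \<le> j" "j \<le> r" shows "inj_on (f j) {1..k}"
proof (rule inj_onI)
  fix s s' assume s: "s \<in> {1..k}" "s' \<in> {1..k}" "f j s = f j s'"
  have canon: "\<exists>a b. (a,b) \<in> hyperpath_index_set k r \<and> f j t = f a b \<and> (a = j \<and> b = t \<or> t = 1 \<and> 2 \<le> j \<and> a = j-1 \<and> b = k)"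
    if "t \<in> {1..k}" for t
  proof (cases "t = 1 \<and> 2 \<le> j")
    case True
    then show ?thesis using glue[of j] assms k3 unfolding I_iff by (intro exI[of _ "j-1"] exI[of _ k]) auto
  next
    case False
    then show ?thesis using assms that unfolding I_iff by (intro exI[of _ j] exI[of _ t]) auto
  qed
  obtain a b where ab: "(a,b) \<in> hyperpath_index_set k r" "f j s = f a b" "a = j \<and> b = s \<or> s = 1 \<and> 2 \<le> j \<and> a = j-1 \<and> b = k"
    using canon[OF s(1)] by blast
  obtain c d where cd: "(c,d) \<in> hyperpath_index_set k r" "f j s' = f c d" "c = j \<and> d = s' \<or> s' = 1 \<and> 2 \<le> j \<and> c = j-1 \<and> d = k"
    using canon[OF s(2)] by blast
  have "a = c \<and> b = d" using finj[OF ab(1) cd(1)] ab(2) cd(2) s(3) by simp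
  then show "s = s'" using ab(3) cd(3) s k3 by auto
qed

lemma Ej_finite: "finite (Ej j)" unfolding Ej_def by simp

lemma card_Ej: "1 \<le> j \<Longrightarrow> j \<le> r \<Longrightarrow> card (Ej j) = k"
  unfolding Ej_def using card_image[OF fj_inj] by simp

lemma prod_Ej: "1 \<le> j \<Longrightarrow> j \<le> r \<Longrightarrow> prod x (Ej j) = PP x j"
  unfolding Ej_def PP_def using prod.reindex[OF fj_inj] by simp

lemma edges_of: "{e \<in> EE. v \<in> e} = Ej ` J v"
  unfolding EE_def J_def by auto

lemma lap: "laplacian_apply EE k x v = real (card (J v)) * x v ^ (k-1) - (\<Sum>j\<in>J v. \<Prod>s\<in>Ej j - {v}. x s)"
proof -
  have ij: "inj_on Ej (J v)" unfolding J_def by (rule Ej_inj_on)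
  show ?thesis unfolding laplacian_apply_def degree_def edges_of
    using card_image[OF ij] sum.reindex[OF ij] by simp
qed

lemma lap_mult:
  "x v * laplacian_apply EE k x v = real (card (J v)) * x v ^ k - (\<Sum>j\<in>J v. PP x j)"
proof -
  have "x v * (\<Sum>j\<in>J v. \<Prod>s\<in>Ej j - {v}. x s) = (\<Sum>j\<in>J v. x v * (\<Prod>s\<in>Ej j - {v}. x s))"
    by (simp add: sum_distrib_left)
  also have "\<dots> = (\<Sum>j\<in>J v. PP x j)"
  proof (rule sum.cong[OF refl])
    fix j assume "j \<in> J v"
    then have "v \<in> Ej j" "1 \<le> j" "j \<le> r" unfolding J_def by auto
    then show "x v * (\<Prod>s\<in>Ej j - {v}. x s) = PP x j"
      using prod.remove[OF Ej_finite, of v j x] prod_Ej[of j x] by simp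
  qed
  finally have s: "x v * (\<Sum>j\<in>J v. \<Prod>s\<in>Ej j - {v}. x s) = (\<Sum>j\<in>J v. PP x j)" .
  have kk: "Suc (k-1) = k" using k3 by simp
  have "x v * x v ^ (k-1) = x v ^ k" using power_Suc[of "x v" "k-1"] unfolding kk by simp
  then show ?thesis unfolding lap using s by (simp add: algebra_simps)
qed

lemma J_priv: "1 \<le> a \<Longrightarrow> a \<le> r \<Longrightarrow> 2 \<le> b \<Longrightarrow> b \<le> k-1 \<Longrightarrow> J (f a b) = {a}"
proof -
  assume h: "1 \<le> a" "a \<le> r" "2 \<le> b" "b \<le> k-1"
  have ab: "(a,b) \<in> hyperpath_index_set k r" using h unfolding I_iff by auto
  show ?thesis unfolding J_def using mem[OF ab] h by auto
qed

lemma J_11: "J (f 1 1) = {1}"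
proof -
  have ab: "(1,1) \<in> hyperpath_index_set k r" using k3 unfolding I_iff by auto
  show ?thesis unfolding J_def using mem[OF ab] r2 k3 by auto
qed

lemma J_rk: "J (f r k) = {r}"
proof -
  have ab: "(r,k) \<in> hyperpath_index_set k r" using k3 r2 unfolding I_iff by auto
  show ?thesis unfolding J_def using mem[OF ab] r2 k3 by auto
qed

lemma J_junc: "1 \<le> a \<Longrightarrow> a \<le> r-1 \<Longrightarrow> J (f a k) = {a, a+1}"
proof -
  assume h: "1 \<le> a" "a \<le> r-1"
  have ab: "(a,k) \<in> hyperpath_index_set k r" using h k3 unfolding I_iff by auto
  show ?thesis unfolding J_def using mem[OF ab] h k3 by auto
qed


lemma inV: "(a,b) \<in> hyperpath_index_set k r \<Longrightarrow> f a b \<in> (\<lambda>(j, s). f j s) ` hyperpath_index_set k r"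
  by (metis (no_types, lifting) case_prod_conv image_eqI)

lemma upper:
  assumes kodd: "odd k" and V: "V = (\<lambda>(j, s). f j s) ` hyperpath_index_set k r"
    and eig: "is_H_eigenvalue V EE k lam"
  shows "lam \<le> 2"
proof (rule ccontr)
  assume "\<not> lam \<le> 2"
  then have lam: "lam > 2" by simp
  obtain x where x1: "\<exists>i\<in>V. x i \<noteq> 0" and x2: "\<forall>i\<in>V. laplacian_apply EE k x i = lam * x i ^ (k - 1)"
    using eig unfolding is_H_eigenvalue_def by blast
  have kk: "Suc (k-1) = k" using k3 by simp
  have eqv: "real (card (J (f a b))) * x (f a b) ^ k - (\<Sum>j\<in>J (f a b). PP x j) = lam * x (f a b) ^ k"
    if ab: "(a,b) \<in> hyperpath_index_set k r" for a b
  proof -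
    have fV: "f a b \<in> V" using inV[OF ab] V by simp
    have "laplacian_apply EE k x (f a b) = lam * x (f a b) ^ (k - 1)" using x2 fV by blast
    then have "x (f a b) * laplacian_apply EE k x (f a b) = lam * (x (f a b) * x (f a b) ^ (k - 1))" by simp
    also have "x (f a b) * x (f a b) ^ (k - 1) = x (f a b) ^ k" using power_Suc[of "x (f a b)" "k-1"] unfolding kk by simp
    finally show ?thesis using lap_mult[of x "f a b"] by simp
  qed
  have zero: "x (f j s) = 0" if "1\<le>j" "j\<le>r" "1\<le>s" "s\<le>k" for j s
  proof (rule core[of k r lam "PP x" "\<lambda>j s. x (f j s)", OF k3 kodd r2 lam _ _ _ _ _ _ that])
    show "\<And>j. 1\<le>j \<Longrightarrow> j\<le>r \<Longrightarrow> PP x j = (\<Prod>s\<in>{1..k}. x (f j s))" by (simp add: PP_def)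
    show "\<And>j. 2\<le>j \<Longrightarrow> j\<le>r \<Longrightarrow> x (f j 1) = x (f (j-1) k)" using glue by simp
    show "(1-lam) * x (f j s) ^ k = PP x j" if "1\<le>j" "j\<le>r" "2\<le>s" "s\<le>k-1" for j s
    proof -
      have ab: "(j,s) \<in> hyperpath_index_set k r" using that unfolding I_iff by auto
      show ?thesis using eqv[OF ab] J_priv[OF that] by (simp add: algebra_simps)
    qed
    show "(1-lam) * x (f 1 1) ^ k = PP x 1"
    proof -
      have ab: "(1,1) \<in> hyperpath_index_set k r" using k3 unfolding I_iff by auto
      show ?thesis using eqv[OF ab] J_11 by (simp add: algebra_simps)
    qed
    show "(1-lam) * x (f r k) ^ k = PP x r"
    proof -
      have ab: "(r,k) \<in> hyperpath_index_set k r" using k3 r2 unfolding I_iff by auto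
      show ?thesis using eqv[OF ab] J_rk by (simp add: algebra_simps)
    qed
    show "(2-lam) * x (f j k) ^ k = PP x j + PP x (j+1)" if "1\<le>j" "j\<le>r-1" for j
    proof -
      have ab: "(j,k) \<in> hyperpath_index_set k r" using that k3 unfolding I_iff by auto
      show ?thesis using eqv[OF ab] J_junc[OF that] by (simp add: algebra_simps)
    qed
  qed
  obtain i where i: "i \<in> V" "x i \<noteq> 0" using x1 by blast
  then obtain a b where ab: "(a,b) \<in> hyperpath_index_set k r" "i = f a b" using V by auto
  have "1 \<le> a" "a \<le> r" "1 \<le> b" "b \<le> k" using ab(1) r2 unfolding I_iff by auto
  then show False using zero i ab by simp
qed

lemma lower:
  assumes V: "V = (\<lambda>(j, s). f j s) ` hyperpath_index_set k r"
  shows "is_H_eigenvalue V EE k 2"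
proof -
  define c where "c = f 1 k"
  define x where "x v = (if v = c then 1 else (0::real))" for v
  have c1: "(1,k) \<in> hyperpath_index_set k r" using k3 unfolding I_iff by auto
  have cV: "c \<in> V" using inV[OF c1] V unfolding c_def by simp
  have pz: "(\<Prod>s\<in>Ej j - {i}. x s) = 0" if "j \<in> J i" for i j
  proof -
    have j: "1 \<le> j" "j \<le> r" using that unfolding J_def by auto
    have "\<not> Ej j \<subseteq> {i, c}"
    proof
      assume "Ej j \<subseteq> {i, c}"
      then have "card (Ej j) \<le> card {i, c}" by (intro card_mono) auto
      also have "\<dots> \<le> 2" by (simp add: card_insert_if)
      finally show False using card_Ej[OF j] k3 by simp
    qed
    then obtain w where w: "w \<in> Ej j - {i}" "w \<noteq> c" by blast
    then have "x w = 0" unfolding x_def by simp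
    then show ?thesis using w Ej_finite by (intro prod_zero) auto
  qed
  have lapx: "laplacian_apply EE k x i = real (card (J i)) * x i ^ (k-1)" for i
    unfolding lap using pz by simp
  have r1: "1 \<le> r - 1" using r2 by simp
  have "laplacian_apply EE k x i = 2 * x i ^ (k - 1)" if "i \<in> V" for i
  proof (cases "i = c")
    case True
    have "card (J i) = 2" unfolding True c_def J_junc[OF order_refl r1] by simp
    then show ?thesis using lapx[of i] True unfolding x_def by simp
  next
    case False
    then have "x i = 0" unfolding x_def by simp
    then show ?thesis using lapx[of i] k3 by simp
  qed
  moreover have "x c \<noteq> 0" unfolding x_def by simp
  ultimately show ?thesis unfolding is_H_eigenvalue_def using cV by blast
qed

end

theorem proposition4p2:
  fixes V :: "'a set" and E :: "'a set set" and k r :: nat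
  assumes "k \<ge> 3" and "odd k" and "r \<ge> 3"
    and "is_hyperpath k r V E"
  shows "largest_H_eigenvalue V E k = 2"
proof -
  obtain f :: "nat \<Rightarrow> nat \<Rightarrow> 'a" where f: "inj_on (\<lambda>(j, s). f j s) (hyperpath_index_set k r)"
    "\<forall>j. 2 \<le> j \<and> j \<le> r \<longrightarrow> f j 1 = f (j - 1) k"
    "V = (\<lambda>(j, s). f j s) ` hyperpath_index_set k r"
    "E = {f j ` {1..k} | j. 1 \<le> j \<and> j \<le> r}"
    using assms(4) unfolding is_hyperpath_def by blast
  interpret hp f k r
    using f(1,2) assms(1,3) by unfold_locales auto
  have E: "E = hp.EE f k r" unfolding EE_def Ej_def f(4) by simp
  show ?thesis unfolding largest_H_eigenvalue_def E
  proof (rule Greatest_equality)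
    show "is_H_eigenvalue V (hp.EE f k r) k 2" by (rule lower[OF f(3)])
    show "\<And>y. is_H_eigenvalue V (hp.EE f k r) k y \<Longrightarrow> y \<le> 2" using upper[OF assms(2) f(3)] by blast
  qed
qed

end
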